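(* Let $S=\{0,1,2,\dots\}$, $\lambda,\mu>0$, $\theta=\lambda/\mu$, and let $X$ be the continuous-time Markov chain on $S$ with rates $q(i,i+1)=\lambda$; $q(i,i-k)=\mu$ for $i\ge1$, $1\le k\le i$; $q(i,i)=-(\lambda+i\mu)$; all other off-diagonal rates $0$. Let $\tau$ be a probability on $S$, $\mathbf P^{(\tau)}$ the law of $X$ with initial distribution $\tau$, $F^{(\tau)}_{X(t)}(x)=\mathbf P^{(\tau)}\{X(t)\le x\}$, $T(x)=\sum_{n\le x}\tau(n)$, and $\Pi^*(x)=\sum_{n\le x}\pi^*(n)$ with $\pi^*(n)=\theta^n(n+1)/(\theta+1)_{n+1}$. Then for every $t\ge0$, $$\sup_{x\in\mathbb R}|\Pi^*(x)-F^{(\tau)}_{X(t)}(x)|\le\sup_{x\in\mathbb R}|\Pi^*(x)-T(x)|\cdot\exp\{-\mu t-\theta(e^{-\mu t}+\mu t-1)\}.$$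
   Context: $(a)_n$ denotes the rising factorial $a(a+1)\cdots(a+n-1)$, $(a)_0=1$. *)

theory Defs
  imports "HOL-Analysis.Analysis"
begin

definition out_rate :: "real \<Rightarrow> real \<Rightarrow> nat \<Rightarrow> real" where
  "out_rate lam mu i = lam + real i * mu"

text \<open>Minimal (Feller) construction of the transition function, split by the number
  of jumps n: jump_trans lam mu n t i j = P_i(X(t) = j and exactly n jumps in [0,t]).
  From i the chain jumps to i+1 at rate lam and to each of 0,...,i-1 (i.e. i-k, 1<=k<=i)
  at rate mu.\<close>
fun jump_trans :: "real \<Rightarrow> real \<Rightarrow> nat \<Rightarrow> real \<Rightarrow> nat \<Rightarrow> nat \<Rightarrow> real" where
  "jump_trans lam mu 0 t i j = (if i = j then exp (- out_rate lam mu i * t) else 0)"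
| "jump_trans lam mu (Suc n) t i j =
     integral {0..t} (\<lambda>s. exp (- out_rate lam mu i * s) *
        (lam * jump_trans lam mu n (t - s) (Suc i) j
         + mu * (\<Sum>k<i. jump_trans lam mu n (t - s) k j)))"

text \<open>Transition probabilities p_t(i,j) of the chain X (minimal chain; it is non-explosive).\<close>
definition trans_prob :: "real \<Rightarrow> real \<Rightarrow> real \<Rightarrow> nat \<Rightarrow> nat \<Rightarrow> real" where
  "trans_prob lam mu t i j = (\<Sum>n. jump_trans lam mu n t i j)"

definition distF :: "real \<Rightarrow> real \<Rightarrow> (nat \<Rightarrow> real) \<Rightarrow> real \<Rightarrow> real \<Rightarrow> real" where
  "distF lam mu tau t x = (\<Sum>j\<in>{j::nat. real j \<le> x}. (\<Sum>i. tau i * trans_prob lam mu t i j))"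

definition cdfT :: "(nat \<Rightarrow> real) \<Rightarrow> real \<Rightarrow> real" where
  "cdfT tau x = (\<Sum>n\<in>{n::nat. real n \<le> x}. tau n)"

definition pi_star :: "real \<Rightarrow> nat \<Rightarrow> real" where
  "pi_star \<theta> n = \<theta> ^ n * real (n + 1) / pochhammer (\<theta> + 1) (n + 1)"

definition Pi_star :: "real \<Rightarrow> real \<Rightarrow> real" where
  "Pi_star \<theta> x = (\<Sum>n\<in>{n::nat. real n \<le> x}. pi_star \<theta> n)"

end

theory Submission
  imports Defs
begin


lemma integral_flip:
  fixes f :: "real \<Rightarrow> real"
  assumes "(f has_integral I) {0..t}"
  shows "((\<lambda>s. f (t - s)) has_integral I) {0..t}"
proof -
  have "((\<lambda>x. f (-x)) has_integral I) {-t..-0}"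
    using assms by (simp only: has_integral_reflect_real)
  then have "((\<lambda>x. f (-(x + (-t)))) has_integral I) {-t-(-t)..-0-(-t)}"
    by (rule has_integral_shift_real_ivl)
  then show ?thesis by (simp add: algebra_simps)
qed

lemma jt_cont:
  "continuous_on {0..T} (\<lambda>t. jump_trans lam mu n t i j)"
proof (induction n arbitrary: T i j)
  case 0
  then show ?case by (cases "i = j") (auto intro!: continuous_intros)
next
  case (Suc n)
  define q where "q = out_rate lam mu i"
  define h where "h = (\<lambda>u. lam * jump_trans lam mu n u (Suc i) j
         + mu * (\<Sum>k<i. jump_trans lam mu n u k j))"
  have hc: "continuous_on {0..T} h" for T
    unfolding h_def using Suc.IH by (auto intro!: continuous_intros)
  have eq: "jump_trans lam mu (Suc n) t i j = exp (- q * t) * integral {0..t} (\<lambda>u. exp (q * u) * h u)"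
    if t: "t \<in> {0..T}" for t
  proof -
    have c1: "continuous_on {0..t} (\<lambda>u. exp (q * u) * h u)"
      using hc[of t] by (auto intro!: continuous_intros)
    then have "((\<lambda>u. exp (- q * t) * (exp (q * u) * h u)) has_integral exp (- q * t) * integral {0..t} (\<lambda>u. exp (q * u) * h u)) {0..t}"
      by (intro has_integral_mult_right integrable_integral integrable_continuous_interval)
    then have "((\<lambda>s. exp (- q * t) * (exp (q * (t - s)) * h (t - s))) has_integral exp (- q * t) * integral {0..t} (\<lambda>u. exp (q * u) * h u)) {0..t}"
      by (rule integral_flip)
    moreover have "(\<lambda>s. exp (- q * t) * (exp (q * (t - s)) * h (t - s))) = (\<lambda>s. exp (- q * s) * h (t - s))"
    proof
      fix s
      have "exp (- q * t) * exp (q * (t - s)) = exp (- q * s)"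
        by (simp add: exp_add[symmetric] algebra_simps)
      then show "exp (- q * t) * (exp (q * (t - s)) * h (t - s)) = exp (- q * s) * h (t - s)"
        by (simp add: mult.assoc[symmetric])
    qed
    ultimately have "((\<lambda>s. exp (- q * s) * h (t - s)) has_integral exp (- q * t) * integral {0..t} (\<lambda>u. exp (q * u) * h u)) {0..t}"
      by simp
    then have "integral {0..t} (\<lambda>s. exp (- q * s) * h (t - s)) = exp (- q * t) * integral {0..t} (\<lambda>u. exp (q * u) * h u)"
      by (rule integral_unique)
    then show ?thesis unfolding q_def h_def by simp
  qed
  have "continuous_on {0..T} (\<lambda>t. exp (- q * t) * integral {0..t} (\<lambda>u. exp (q * u) * h u))"
  proof (rule continuous_on_mult)
    show "continuous_on {0..T} (\<lambda>t. exp (- q * t))" by (intro continuous_intros)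
    have "continuous_on {0..T} (\<lambda>u. exp (q * u) * h u)"
      using hc[of T] by (intro continuous_intros)
    then show "continuous_on {0..T} (\<lambda>t. integral {0..t} (\<lambda>u. exp (q * u) * h u))"
      by (intro indefinite_integral_continuous_1 integrable_continuous_interval)
  qed
  moreover have "continuous_on {0..T} (\<lambda>t. jump_trans lam mu (Suc n) t i j) = continuous_on {0..T} (\<lambda>t. exp (- q * t) * integral {0..t} (\<lambda>u. exp (q * u) * h u))"
    by (rule continuous_on_cong) (simp_all only: eq)
  ultimately show ?case by simp
qed



definition Qs :: "real \<Rightarrow> nat \<Rightarrow> real" where
  "Qs th r = (\<Sum>n<r. pi_star th n)"

lemma Qs_closed:
  assumes "th > 0"
  shows "Qs th r = 1 - th ^ r / pochhammer (th + 1) r"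
proof (induction r)
  case 0
  then show ?case by (simp add: Qs_def)
next
  case (Suc r)
  have p: "pochhammer (th + 1) r > 0" using assms by (intro pochhammer_pos) simp
  have p2: "th + 1 + real r > 0" using assms by simp
  have "Qs th (Suc r) = Qs th r + pi_star th r" by (simp add: Qs_def)
  also have "\<dots> = 1 - th ^ r / pochhammer (th + 1) r + th ^ r * real (r + 1) / (pochhammer (th + 1) r * (th + 1 + real r))"
    using Suc by (simp add: pi_star_def pochhammer_Suc)
  also have "\<dots> = 1 - th ^ Suc r / (pochhammer (th + 1) r * (th + 1 + real r))"
  proof -
    define P where "P = pochhammer (th + 1) r"
    define D where "D = th + 1 + real r"
    have "P > 0" "D > 0" using p p2 by (auto simp: P_def D_def)
    have "1 - th ^ r / P + th ^ r * real (r + 1) / (P * D) = 1 - (th ^ r * D - th ^ r * real (r + 1)) / (P * D)"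
      using \<open>D > 0\<close> \<open>P > 0\<close> by (simp add: field_simps)
    moreover have "th ^ r * D - th ^ r * real (r + 1) = th ^ Suc r"
      by (simp add: D_def algebra_simps)
    ultimately have "1 - th ^ r / P + th ^ r * real (r + 1) / (P * D) = 1 - th ^ Suc r / (P * D)"
      by simp
    then show ?thesis by (simp add: P_def D_def)
  qed
  finally show ?case by (simp add: pochhammer_Suc)
qed

lemma Qs_stat:
  assumes "lam > 0" "mu > 0"
  shows "(lam + mu * (real r + 1)) * Qs (lam/mu) (Suc r) - lam * Qs (lam/mu) r = mu * (real r + 1)"
proof -
  define th where "th = lam / mu"
  have th: "th > 0" using assms by (simp add: th_def)
  have lam: "lam = mu * th" using assms by (simp add: th_def)
  have p: "pochhammer (th + 1) r > 0" using th by (intro pochhammer_pos) simp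
  have p2: "th + 1 + real r > 0" using th by simp
  define H where "H = th ^ r / pochhammer (th + 1) r"
  have Q1: "Qs th r = 1 - H" using Qs_closed[OF th] H_def by simp
  have Q2: "Qs th (Suc r) = 1 - H * th / (th + 1 + real r)"
    using Qs_closed[OF th, of "Suc r"] by (simp add: H_def pochhammer_Suc field_simps)
  have "(lam + mu * (real r + 1)) * (1 - H * th / (th + 1 + real r)) - lam * (1 - H) = mu * (real r + 1)"
    unfolding lam using p2 assms by (simp add: field_simps)
  then show ?thesis unfolding th_def[symmetric] unfolding Q1 Q2 .
qed

lemma Qs_0[simp]: "Qs th 0 = 0" by (simp add: Qs_def)

lemma Qs_bounds:
  assumes "th > 0" shows "0 \<le> Qs th r" "Qs th r \<le> 1"
proof -
  have p: "pochhammer (th + 1) r > 0" using assms by (intro pochhammer_pos) simp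
  show "Qs th r \<le> 1" using Qs_closed[OF assms] p assms by simp
  show "0 \<le> Qs th r" unfolding Qs_def pi_star_def using p assms
    by (intro sum_nonneg divide_nonneg_pos) (auto intro!: pochhammer_pos simp del: of_nat_Suc)
qed

lemma sum_ind_lt: "(\<Sum>l<i. (if l \<le> k then 1 else 0 :: real)) = real (min i (Suc k))"
  by (induction i) (auto simp: min_def)

lemma ode_alg:
  fixes K :: "nat \<Rightarrow> real" and Q :: "nat \<Rightarrow> real"
  assumes KS: "K (Suc m) = 0" and Q0: "Q 0 = 0"
    and stat: "\<And>r. (lam + mu * (real r + 1)) * Q (Suc r) - lam * Q r = mu * (real r + 1)"
  defines "c \<equiv> \<lambda>k i. (if i \<le> k then 1 else 0) - Q (Suc k)"
  defines "V \<equiv> \<lambda>i. Q (Suc m) + (\<Sum>k\<le>m. K k * c k i)"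
  shows "(\<Sum>k\<le>m. (- (lam + mu * (real k + 1)) * K k + lam * K (Suc k)) * c k i)
       = - (lam + real i * mu) * V i + lam * V (Suc i) + mu * (\<Sum>l<i. V l)"
proof -
  define d where "d = (\<lambda>k i. (if i < k then 1 else 0) - Q k)"
  have shift: "(\<Sum>k\<le>m. K (Suc k) * c k i) = (\<Sum>k\<le>m. K k * d k i)"
  proof -
    have "(\<Sum>k\<le>Suc m. K k * d k i) = K 0 * d 0 i + (\<Sum>k\<le>m. K (Suc k) * d (Suc k) i)"
      by (rule sum.atMost_Suc_shift)
    also have "\<dots> = (\<Sum>k\<le>m. K (Suc k) * c k i)"
      by (simp add: d_def c_def Q0 less_Suc_eq_le)
    finally show ?thesis using KS by simp
  qed
  have L: "(\<Sum>k\<le>m. (- (lam + mu * (real k + 1)) * K k + lam * K (Suc k)) * c k i)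
      = (\<Sum>k\<le>m. K k * (- (lam + mu * (real k + 1)) * c k i + lam * d k i))"
  proof -
    have "(\<Sum>k\<le>m. (- (lam + mu * (real k + 1)) * K k + lam * K (Suc k)) * c k i)
      = (\<Sum>k\<le>m. - (lam + mu * (real k + 1)) * K k * c k i) + lam * (\<Sum>k\<le>m. K (Suc k) * c k i)"
      by (simp add: sum.distrib sum_distrib_left distrib_right mult.assoc)
    also have "\<dots> = (\<Sum>k\<le>m. - (lam + mu * (real k + 1)) * K k * c k i) + lam * (\<Sum>k\<le>m. K k * d k i)"
      by (simp only: shift)
    also have "\<dots> = (\<Sum>k\<le>m. K k * (- (lam + mu * (real k + 1)) * c k i + lam * d k i))"
      by (simp add: sum.distrib sum_distrib_left distrib_left mult.assoc mult.left_commute)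
    finally show ?thesis .
  qed
  have sw: "(\<Sum>l<i. V l) = real i * Q (Suc m) + (\<Sum>k\<le>m. K k * (\<Sum>l<i. c k l))"
    unfolding V_def by (simp add: sum.distrib sum_distrib_left sum.swap[of _ "{..<i}"])
  have cs: "(\<Sum>l<i. c k l) = real (min i (Suc k)) - real i * Q (Suc k)" for k
    unfolding c_def by (simp add: sum_subtractf sum_ind_lt)
  have R: "- (lam + real i * mu) * V i + lam * V (Suc i) + mu * (\<Sum>l<i. V l)
     = (\<Sum>k\<le>m. K k * (- (lam + real i * mu) * c k i + lam * c k (Suc i) + mu * (\<Sum>l<i. c k l)))"
    unfolding sw unfolding V_def
    by (simp add: algebra_simps sum.distrib sum_distrib_left sum_subtractf sum_negf)
  have pt: "- (lam + mu * (real k + 1)) * c k i + lam * d k i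
     = - (lam + real i * mu) * c k i + lam * c k (Suc i) + mu * (real (min i (Suc k)) - real i * Q (Suc k))" for k
  proof -
    have s: "(lam + mu * (real k + 1)) * Q (Suc k) - lam * Q k = mu * (real k + 1)" by (rule stat)
    show ?thesis
    proof (cases "i \<le> k")
      case True
      then show ?thesis unfolding c_def d_def using s
        by (cases "i < k") (auto simp: min_def algebra_simps)
    next
      case False
      then have "min i (Suc k) = Suc k" by simp
      then show ?thesis unfolding c_def d_def using s False
        by (simp add: algebra_simps)
    qed
  qed
  show ?thesis unfolding L R cs using pt by (intro sum.cong refl) presburger
qed



definition Kf :: "real \<Rightarrow> real \<Rightarrow> nat \<Rightarrow> real \<Rightarrow> nat \<Rightarrow> real" where
  "Kf lam mu m t k = (if k \<le> m then exp (- (lam + mu * (real k + 1)) * t)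
      * ((lam / mu) * (1 - exp (- mu * t))) ^ (m - k) / fact (m - k) else 0)"

definition Vf :: "real \<Rightarrow> real \<Rightarrow> nat \<Rightarrow> real \<Rightarrow> nat \<Rightarrow> real" where
  "Vf lam mu m t i = Qs (lam / mu) (Suc m)
     + (\<Sum>k\<le>m. Kf lam mu m t k * ((if i \<le> k then 1 else 0) - Qs (lam / mu) (Suc k)))"

definition Kd :: "real \<Rightarrow> real \<Rightarrow> nat \<Rightarrow> real \<Rightarrow> nat \<Rightarrow> real" where
  "Kd lam mu m t k = - (lam + mu * (real k + 1)) * Kf lam mu m t k + lam * Kf lam mu m t (Suc k)"

lemma Kf_deriv:
  assumes "mu > 0"
  shows "((\<lambda>t. Kf lam mu m t k) has_real_derivative Kd lam mu m t k) (at t)"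
proof (cases "k \<le> m")
  case False
  then show ?thesis by (simp add: Kf_def Kd_def)
next
  case True
  define c where "c = lam + mu * (real k + 1)"
  define A where "A = (\<lambda>t. (lam / mu) * (1 - exp (- mu * t)))"
  show ?thesis
  proof (cases "k = m")
    case True
    have "((\<lambda>t. exp (- c * t)) has_real_derivative (- c * exp (- c * t))) (at t)"
      by (auto intro!: derivative_eq_intros)
    then show ?thesis using True by (simp add: Kf_def Kd_def c_def)
  next
    case False
    then obtain r where r: "m - k = Suc r" "m - Suc k = r" "Suc k \<le> m" using \<open>k \<le> m\<close>
      by (metis Suc_diff_Suc Suc_leI diff_Suc_1 le_neq_implies_less)
    have dA: "(A has_real_derivative lam * exp (- mu * t)) (at t)"
      unfolding A_def using assms by (auto intro!: derivative_eq_intros)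
    have "((\<lambda>t. exp (- c * t) * A t ^ Suc r / fact (Suc r)) has_real_derivative
        ((- c * exp (- c * t)) * A t ^ Suc r + exp (- c * t) * (real (Suc r) * A t ^ r * (lam * exp (- mu * t)))) / fact (Suc r)) (at t)"
      by (auto intro!: derivative_eq_intros dA simp del: fact_Suc power_Suc of_nat_Suc)
    moreover have "((- c * exp (- c * t)) * A t ^ Suc r + exp (- c * t) * (real (Suc r) * A t ^ r * (lam * exp (- mu * t)))) / fact (Suc r)
       = - c * (exp (- c * t) * A t ^ Suc r / fact (Suc r)) + lam * (exp (- (c + mu) * t) * A t ^ r / fact r)"
    proof -
      have e: "exp (- (c + mu) * t) = exp (- c * t) * exp (- mu * t)" by (simp add: exp_add[symmetric] algebra_simps)
      have f: "(fact (Suc r) :: real) = real (Suc r) * fact r" by simp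
      have alg: "((- c * E) * (B * B ^ r) + E * (n * B ^ r * (lam * X))) / (n * F)
          = - c * (E * (B * B ^ r) / (n * F)) + lam * (E * X * B ^ r / F)"
        if "F > 0" "n > 0" for F n E B X :: real
        using that by (simp add: field_simps)
      have "(fact r :: real) > 0" "real (Suc r) > 0" by auto
      from alg[OF this, of "exp (- c * t)" "A t" "exp (- mu * t)"]
      show ?thesis unfolding e f power_Suc by (simp only: mult.assoc)
    qed
    moreover have "Kf lam mu m t k = exp (- c * t) * A t ^ Suc r / fact (Suc r)" for t
      using r \<open>k \<le> m\<close> by (simp add: Kf_def c_def A_def)
    moreover have "Kf lam mu m t (Suc k) = exp (- (c + mu) * t) * A t ^ r / fact r"
      using r by (simp add: Kf_def c_def A_def algebra_simps)
    ultimately show ?thesis unfolding Kd_def c_def[symmetric] by simp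
  qed
qed

definition Vd :: "real \<Rightarrow> real \<Rightarrow> nat \<Rightarrow> real \<Rightarrow> nat \<Rightarrow> real" where
  "Vd lam mu m t i = (\<Sum>k\<le>m. Kd lam mu m t k * ((if i \<le> k then 1 else 0) - Qs (lam / mu) (Suc k)))"

lemma Vf_deriv:
  assumes "mu > 0"
  shows "((\<lambda>t. Vf lam mu m t i) has_real_derivative Vd lam mu m t i) (at t)"
  unfolding Vf_def Vd_def
  by (auto intro!: derivative_eq_intros Kf_deriv[OF assms])

lemma Vf_ode:
  assumes "lam > 0" "mu > 0"
  shows "Vd lam mu m t i = - (lam + real i * mu) * Vf lam mu m t i + lam * Vf lam mu m t (Suc i)
       + mu * (\<Sum>l<i. Vf lam mu m t l)"
  unfolding Vd_def Kd_def Vf_def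
  by (rule ode_alg[where K = "Kf lam mu m t" and Q = "Qs (lam/mu)"])
     (auto simp: Kf_def Qs_stat[OF assms])

lemma Vf_0: "Vf lam mu m 0 i = (if i \<le> m then 1 else 0)"
proof -
  have "(\<Sum>k\<le>m. Kf lam mu m 0 k * ((if i \<le> k then 1 else 0) - Qs (lam / mu) (Suc k)))
     = (\<Sum>k\<in>{m}. Kf lam mu m 0 k * ((if i \<le> k then 1 else 0) - Qs (lam / mu) (Suc k)))"
    by (rule sum.mono_neutral_right) (auto simp: Kf_def)
  then show ?thesis by (simp add: Vf_def Kf_def)
qed

lemma Vf_inteq:
  assumes "lam > 0" "mu > 0" "t \<ge> 0"
  shows "((\<lambda>s. exp (- out_rate lam mu i * s) * (lam * Vf lam mu m (t - s) (Suc i)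
          + mu * (\<Sum>k<i. Vf lam mu m (t - s) k)))
       has_integral (Vf lam mu m t i - exp (- out_rate lam mu i * t) * (if i \<le> m then 1 else 0))) {0..t}"
proof -
  define q where "q = out_rate lam mu i"
  have q: "q = lam + real i * mu" by (simp add: q_def out_rate_def)
  define P where "P = (\<lambda>s. exp (- q * s) * Vf lam mu m (t - s) i)"
  define P' where "P' = (\<lambda>s. - (exp (- q * s) * (lam * Vf lam mu m (t - s) (Suc i)
          + mu * (\<Sum>k<i. Vf lam mu m (t - s) k))))"
  have "(P has_real_derivative P' s) (at s)" for s
  proof -
    have d1: "((\<lambda>s. Vf lam mu m (t - s) i) has_real_derivative Vd lam mu m (t - s) i * (-1)) (at s)"
      by (rule DERIV_chain2[OF Vf_deriv[OF assms(2)]]) (auto intro!: derivative_eq_intros)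
    have "(P has_real_derivative (- q * exp (- q * s)) * Vf lam mu m (t - s) i + exp (- q * s) * (Vd lam mu m (t - s) i * (-1))) (at s)"
      unfolding P_def by (auto intro!: derivative_eq_intros d1)
    moreover have "(- q * exp (- q * s)) * Vf lam mu m (t - s) i + exp (- q * s) * (Vd lam mu m (t - s) i * (-1)) = P' s"
      unfolding P'_def Vf_ode[OF assms(1,2)] q by (simp add: algebra_simps)
    ultimately show ?thesis by simp
  qed
  then have "(P' has_integral (P t - P 0)) {0..t}"
    using assms(3)
    by (intro fundamental_theorem_of_calculus)
       (auto simp: has_real_derivative_iff_has_vector_derivative[symmetric] intro: has_field_derivative_at_within)
  then have "((\<lambda>s. - P' s) has_integral - (P t - P 0)) {0..t}"
    by (rule has_integral_neg)
  moreover have "- (P t - P 0) = Vf lam mu m t i - exp (- q * t) * (if i \<le> m then 1 else 0)"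
    by (simp add: P_def Vf_0)
  ultimately show ?thesis unfolding P'_def q_def by simp
qed



definition gS :: "real \<Rightarrow> real \<Rightarrow> nat \<Rightarrow> nat \<Rightarrow> real \<Rightarrow> nat \<Rightarrow> real" where
  "gS lam mu m n t i = (\<Sum>j\<le>m. jump_trans lam mu n t i j)"

lemma jt_int:
  assumes "t \<ge> 0"
  shows "((\<lambda>s. exp (- out_rate lam mu i * s) *
        (lam * jump_trans lam mu n (t - s) (Suc i) j
         + mu * (\<Sum>k<i. jump_trans lam mu n (t - s) k j))) has_integral jump_trans lam mu (Suc n) t i j) {0..t}"
proof -
  have c: "continuous_on {0..t} (\<lambda>s. jump_trans lam mu n (t - s) i' j)" for i'
  proof (rule continuous_on_compose2[OF jt_cont[of t]])
    show "continuous_on {0..t} (\<lambda>s. t - s)" by (intro continuous_intros)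
    show "(\<lambda>s. t - s) ` {0..t} \<subseteq> {0..t}" by auto
  qed
  have "continuous_on {0..t} (\<lambda>s. exp (- out_rate lam mu i * s) *
        (lam * jump_trans lam mu n (t - s) (Suc i) j
         + mu * (\<Sum>k<i. jump_trans lam mu n (t - s) k j)))"
    using c by (intro continuous_intros) auto
  then show ?thesis
    by (simp add: integrable_continuous_interval integrable_integral)
qed

lemma gS_int:
  assumes "t \<ge> 0"
  shows "((\<lambda>s. exp (- out_rate lam mu i * s) *
        (lam * gS lam mu m n (t - s) (Suc i) + mu * (\<Sum>k<i. gS lam mu m n (t - s) k)))
       has_integral gS lam mu m (Suc n) t i) {0..t}"
proof -
  have "((\<lambda>s. \<Sum>j\<le>m. exp (- out_rate lam mu i * s) *
        (lam * jump_trans lam mu n (t - s) (Suc i) j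
         + mu * (\<Sum>k<i. jump_trans lam mu n (t - s) k j))) has_integral gS lam mu m (Suc n) t i) {0..t}"
    unfolding gS_def by (intro has_integral_sum jt_int assms) auto
  moreover have "(\<Sum>j\<le>m. exp (- out_rate lam mu i * s) *
        (lam * jump_trans lam mu n (t - s) (Suc i) j
         + mu * (\<Sum>k<i. jump_trans lam mu n (t - s) k j)))
      = exp (- out_rate lam mu i * s) *
        (lam * gS lam mu m n (t - s) (Suc i) + mu * (\<Sum>k<i. gS lam mu m n (t - s) k))" for s
    unfolding gS_def
    by (simp add: sum_distrib_left sum.distrib distrib_left sum.swap[of _ "{..<i}"])
  ultimately show ?thesis by simp
qed

lemma gS_0: "gS lam mu m 0 t i = exp (- out_rate lam mu i * t) * (if i \<le> m then 1 else 0)"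
  unfolding gS_def by (simp add: sum.delta)

definition Ef :: "real \<Rightarrow> real \<Rightarrow> nat \<Rightarrow> nat \<Rightarrow> real \<Rightarrow> nat \<Rightarrow> real" where
  "Ef lam mu m N t i = Vf lam mu m t i - (\<Sum>n<N. gS lam mu m n t i)"

lemma Ef_int:
  assumes "lam > 0" "mu > 0" "t \<ge> 0"
  shows "((\<lambda>s. exp (- out_rate lam mu i * s) *
        (lam * Ef lam mu m N (t - s) (Suc i) + mu * (\<Sum>k<i. Ef lam mu m N (t - s) k)))
       has_integral Ef lam mu m (Suc N) t i) {0..t}"
proof -
  let ?q = "out_rate lam mu i"
  have "((\<lambda>s. exp (- ?q * s) * (lam * Vf lam mu m (t - s) (Suc i) + mu * (\<Sum>k<i. Vf lam mu m (t - s) k))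
       - (\<Sum>n<N. exp (- ?q * s) *
        (lam * gS lam mu m n (t - s) (Suc i) + mu * (\<Sum>k<i. gS lam mu m n (t - s) k))))
     has_integral ((Vf lam mu m t i - exp (- ?q * t) * (if i \<le> m then 1 else 0)) - (\<Sum>n<N. gS lam mu m (Suc n) t i))) {0..t}"
    by (intro has_integral_diff Vf_inteq assms has_integral_sum gS_int) auto
  moreover have "(Vf lam mu m t i - exp (- ?q * t) * (if i \<le> m then 1 else 0)) - (\<Sum>n<N. gS lam mu m (Suc n) t i)
      = Ef lam mu m (Suc N) t i"
    unfolding Ef_def sum.lessThan_Suc_shift gS_0 by simp
  moreover have "exp (- ?q * s) * (lam * Vf lam mu m (t - s) (Suc i) + mu * (\<Sum>k<i. Vf lam mu m (t - s) k))
       - (\<Sum>n<N. exp (- ?q * s) *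
        (lam * gS lam mu m n (t - s) (Suc i) + mu * (\<Sum>k<i. gS lam mu m n (t - s) k)))
     = exp (- ?q * s) *
        (lam * Ef lam mu m N (t - s) (Suc i) + mu * (\<Sum>k<i. Ef lam mu m N (t - s) k))" for s
    unfolding Ef_def
    by (simp add: sum_distrib_left sum.distrib distrib_left sum_subtractf right_diff_distrib
        sum.swap[of _ "{..<i}"])
  ultimately show ?thesis by simp
qed



lemma Kf_nonneg:
  assumes "lam > 0" "mu > 0" "t \<ge> 0"
  shows "Kf lam mu m t k \<ge> 0"
  using assms by (auto simp: Kf_def intro!: mult_nonneg_nonneg divide_nonneg_pos zero_le_power)

lemma exp_partial_le:
  fixes a :: real assumes "a \<ge> 0"
  shows "(\<Sum>r\<le>m. a ^ r / fact r) \<le> exp a"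
proof -
  have "(\<Sum>r\<le>m. a ^ r /\<^sub>R fact r) \<le> (\<Sum>r. a ^ r /\<^sub>R fact r)"
    by (rule sum_le_suminf) (use assms summable_exp_generic[of a] in auto)
  then show ?thesis by (simp add: exp_def divide_inverse_commute mult.commute)
qed

definition Bnd :: "real \<Rightarrow> real \<Rightarrow> real \<Rightarrow> real" where
  "Bnd lam mu t = exp (- mu * t - (lam / mu) * (exp (- mu * t) + mu * t - 1))"

lemma Bnd_le1:
  assumes "lam > 0" "mu > 0" "t \<ge> 0"
  shows "Bnd lam mu t \<le> 1"
proof -
  have "exp (- mu * t) + mu * t - 1 \<ge> 0" using exp_ge_add_one_self[of "- mu * t"] by simp
  then have "(lam / mu) * (exp (- mu * t) + mu * t - 1) \<ge> 0" using assms by simp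
  moreover have "mu * t \<ge> 0" using assms by simp
  ultimately have "- mu * t - (lam / mu) * (exp (- mu * t) + mu * t - 1) \<le> 0" by linarith
  then show ?thesis unfolding Bnd_def by simp
qed

lemma Ksum_bound:
  assumes "lam > 0" "mu > 0" "t \<ge> 0"
  shows "(\<Sum>k\<le>m. Kf lam mu m t k) \<le> Bnd lam mu t"
proof -
  define a where "a = (lam / mu) * (1 - exp (- mu * t))"
  have a: "a \<ge> 0" using assms by (simp add: a_def)
  have "(\<Sum>k\<le>m. Kf lam mu m t k) \<le> (\<Sum>k\<le>m. exp (- (lam + mu) * t) * (a ^ (m - k) / fact (m - k)))"
  proof (rule sum_mono)
    fix k assume k: "k \<in> {..m}"
    have X: "exp (- (lam + mu * (real k + 1)) * t) \<le> exp (- (lam + mu) * t)"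
      using assms by (simp add: mult_right_mono algebra_simps)
    have eq: "Kf lam mu m t k = exp (- (lam + mu * (real k + 1)) * t) * (a ^ (m - k) / fact (m - k))"
      using k by (simp add: Kf_def a_def)
    have nn: "a ^ (m - k) / fact (m - k) \<ge> 0" using a by simp
    show "Kf lam mu m t k \<le> exp (- (lam + mu) * t) * (a ^ (m - k) / fact (m - k))"
      by (simp only: eq) (rule mult_right_mono[OF X nn])
  qed
  also have "\<dots> = exp (- (lam + mu) * t) * (\<Sum>k\<le>m. a ^ (m - k) / fact (m - k))"
    by (simp add: sum_distrib_left)
  also have "(\<Sum>k\<le>m. a ^ (m - k) / fact (m - k)) = (\<Sum>r\<le>m. a ^ r / fact r)"
    by (rule sum.reindex_bij_witness[where i="\<lambda>i. m - i" and j="\<lambda>i. m - i"]) auto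
  also have "exp (- (lam + mu) * t) * (\<Sum>r\<le>m. a ^ r / fact r) \<le> exp (- (lam + mu) * t) * exp a"
    by (rule mult_left_mono[OF exp_partial_le[OF a]]) simp
  also have "\<dots> = Bnd lam mu t"
  proof -
    have "- (lam + mu) * t + a = - mu * t - (lam / mu) * (exp (- mu * t) + mu * t - 1)"
      using assms by (simp add: a_def field_simps)
    then show ?thesis unfolding Bnd_def by (simp add: exp_add[symmetric])
  qed
  finally show ?thesis .
qed

lemma Vf_bound:
  assumes "lam > 0" "mu > 0" "t \<ge> 0"
  shows "\<bar>Vf lam mu m t i\<bar> \<le> 2"
proof -
  have th: "lam / mu > 0" using assms by simp
  have "\<bar>Vf lam mu m t i\<bar> \<le> \<bar>Qs (lam / mu) (Suc m)\<bar>
     + (\<Sum>k\<le>m. \<bar>Kf lam mu m t k * ((if i \<le> k then 1 else 0) - Qs (lam / mu) (Suc k))\<bar>)"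
    unfolding Vf_def by (rule order.trans[OF abs_triangle_ineq add_left_mono[OF sum_abs]])
  also have "\<dots> \<le> 1 + (\<Sum>k\<le>m. Kf lam mu m t k)"
  proof (rule add_mono)
    show "\<bar>Qs (lam / mu) (Suc m)\<bar> \<le> 1" using Qs_bounds[OF th] by simp
    show "(\<Sum>k\<le>m. \<bar>Kf lam mu m t k * ((if i \<le> k then 1 else 0) - Qs (lam / mu) (Suc k))\<bar>) \<le> (\<Sum>k\<le>m. Kf lam mu m t k)"
    proof (rule sum_mono)
      fix k
      have "\<bar>(if i \<le> k then 1 else 0) - Qs (lam / mu) (Suc k)\<bar> \<le> 1"
        using Qs_bounds[OF th, of "Suc k"] by auto
      then show "\<bar>Kf lam mu m t k * ((if i \<le> k then 1 else 0) - Qs (lam / mu) (Suc k))\<bar> \<le> Kf lam mu m t k"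
        using Kf_nonneg[OF assms, of m k] by (simp add: abs_mult mult_left_le)
    qed
  qed
  also have "\<dots> \<le> 2" using Ksum_bound[OF assms, of m] Bnd_le1[OF assms] by simp
  finally show ?thesis .
qed

lemma exp_integral:
  fixes c t :: real
  assumes "c > 0" "t \<ge> 0"
  shows "((\<lambda>s. exp (- c * s)) has_integral (1 - exp (- c * t)) / c) {0..t}"
proof -
  have "((\<lambda>s. exp (- c * s)) has_integral ((- exp (- c * t) / c) - (- exp (- c * 0) / c))) {0..t}"
  proof (rule fundamental_theorem_of_calculus[where f="\<lambda>s. - exp (- c * s) / c"])
    show "0 \<le> t" using assms by simp
    fix x assume "x \<in> {0..t}"
    have "((\<lambda>s. - exp (- c * s) / c) has_real_derivative exp (- c * x)) (at x)"
      using assms by (auto intro!: derivative_eq_intros)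
    then show "((\<lambda>s. - exp (- c * s) / c) has_vector_derivative exp (- c * x)) (at x within {0..t})"
      by (simp add: has_real_derivative_iff_has_vector_derivative[symmetric] has_field_derivative_at_within)
  qed
  then show ?thesis by (simp add: diff_divide_distrib)
qed

lemma sum_pow2: "(\<Sum>k<i. (2::real) ^ k) \<le> 2 ^ i"
  by (induction i) auto

lemma Ef_bound:
  assumes "lam > 0" "mu > 0"
  shows "t \<ge> 0 \<Longrightarrow> \<bar>Ef lam mu m N t i\<bar> \<le> 2 * 2 ^ i * exp ((3 * lam + 2 * mu) * t) / 2 ^ N"
proof (induction N arbitrary: t i)
  case 0
  have "\<bar>Vf lam mu m t i\<bar> \<le> 2" using Vf_bound[OF assms 0] .
  also have "2 \<le> 2 * 2 ^ i * exp ((3 * lam + 2 * mu) * t)"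
  proof -
    have "1 \<le> (2::real) ^ i" by simp
    moreover have "1 \<le> exp ((3 * lam + 2 * mu) * t)" using assms 0 by simp
    ultimately have "1 \<le> (2::real) ^ i * exp ((3 * lam + 2 * mu) * t)"
      using one_le_mult_iff  by (metis mult_mono' mult_1 zero_le_one)
    then show ?thesis by simp
  qed
  finally show ?case by (simp add: Ef_def)
next
  case (Suc N)
  define be where "be = 3 * lam + 2 * mu"
  define q where "q = out_rate lam mu i"
  have q: "q = lam + real i * mu" by (simp add: q_def out_rate_def)
  have qb: "q + be > 0" using assms by (simp add: q be_def add_pos_nonneg)
  define C where "C = 2 * 2 ^ i * exp (be * t) * (2 * lam + mu) / 2 ^ N"
  have int1: "((\<lambda>s. exp (- q * s) *
        (lam * Ef lam mu m N (t - s) (Suc i) + mu * (\<Sum>k<i. Ef lam mu m N (t - s) k)))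
       has_integral Ef lam mu m (Suc N) t i) {0..t}"
    unfolding q_def by (rule Ef_int[OF assms Suc.prems])
  have int2: "((\<lambda>s. C * exp (- (q + be) * s)) has_integral C * ((1 - exp (- (q + be) * t)) / (q + be))) {0..t}"
    by (intro has_integral_mult_right exp_integral qb Suc.prems)
  have pw: "\<bar>exp (- q * s) *
        (lam * Ef lam mu m N (t - s) (Suc i) + mu * (\<Sum>k<i. Ef lam mu m N (t - s) k))\<bar>
      \<le> C * exp (- (q + be) * s)" if s: "s \<in> {0..t}" for s
  proof -
    define D where "D = exp (be * (t - s)) / 2 ^ N"
    have D: "D \<ge> 0" by (simp add: D_def)
    have ts: "t - s \<ge> 0" using s by simp
    have IH: "\<bar>Ef lam mu m N (t - s) k\<bar> \<le> 2 * 2 ^ k * D" for k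
      using Suc.IH[OF ts, of k] by (simp add: D_def be_def)
    have "\<bar>lam * Ef lam mu m N (t - s) (Suc i) + mu * (\<Sum>k<i. Ef lam mu m N (t - s) k)\<bar>
        \<le> lam * (2 * 2 ^ Suc i * D) + mu * (\<Sum>k<i. 2 * 2 ^ k * D)"
    proof -
      have "\<bar>lam * Ef lam mu m N (t - s) (Suc i)\<bar> \<le> lam * (2 * 2 ^ Suc i * D)"
        using IH[of "Suc i"] assms by (simp add: abs_mult mult_left_mono)
      moreover have "\<bar>mu * (\<Sum>k<i. Ef lam mu m N (t - s) k)\<bar> \<le> mu * (\<Sum>k<i. 2 * 2 ^ k * D)"
        using assms by (simp add: abs_mult mult_left_mono order.trans[OF sum_abs sum_mono[OF IH]])
      ultimately show ?thesis by (rule order.trans[OF abs_triangle_ineq add_mono])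
    qed
    also have "\<dots> \<le> lam * (2 * 2 ^ Suc i * D) + mu * (2 * 2 ^ i * D)"
    proof -
      have "(\<Sum>k<i. 2 * 2 ^ k * D) = 2 * D * (\<Sum>k<i. 2 ^ k)"
        by (simp add: sum_distrib_left mult_ac)
      also have "\<dots> \<le> 2 * D * 2 ^ i" using D sum_pow2[of i] by (simp add: mult_left_mono)
      finally show ?thesis using assms by (simp add: mult_left_mono mult_ac)
    qed
    also have "\<dots> = 2 * 2 ^ i * D * (2 * lam + mu)" by (simp add: algebra_simps)
    finally have A: "\<bar>lam * Ef lam mu m N (t - s) (Suc i) + mu * (\<Sum>k<i. Ef lam mu m N (t - s) k)\<bar>
        \<le> 2 * 2 ^ i * D * (2 * lam + mu)" .
    have "\<bar>exp (- q * s) *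
        (lam * Ef lam mu m N (t - s) (Suc i) + mu * (\<Sum>k<i. Ef lam mu m N (t - s) k))\<bar>
       \<le> exp (- q * s) * (2 * 2 ^ i * D * (2 * lam + mu))"
      using A by (simp add: abs_mult mult_left_mono)
    also have "\<dots> = C * exp (- (q + be) * s)"
    proof -
      have "exp (- q * s) * exp (be * (t - s)) = exp (be * t) * exp (- (q + be) * s)"
        by (simp add: exp_add[symmetric] algebra_simps)
      then show ?thesis unfolding C_def D_def by (simp add: field_simps)
    qed
    finally show ?thesis .
  qed
  have "\<bar>Ef lam mu m (Suc N) t i\<bar> \<le> C * ((1 - exp (- (q + be) * t)) / (q + be))"
  proof -
    have "- (C * exp (- (q + be) * s)) \<le> exp (- q * s) *
        (lam * Ef lam mu m N (t - s) (Suc i) + mu * (\<Sum>k<i. Ef lam mu m N (t - s) k))"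
      "exp (- q * s) *
        (lam * Ef lam mu m N (t - s) (Suc i) + mu * (\<Sum>k<i. Ef lam mu m N (t - s) k)) \<le> C * exp (- (q + be) * s)"
      if "s \<in> {0..t}" for s using pw[OF that] by auto
    then have "- (C * ((1 - exp (- (q + be) * t)) / (q + be))) \<le> Ef lam mu m (Suc N) t i"
      "Ef lam mu m (Suc N) t i \<le> C * ((1 - exp (- (q + be) * t)) / (q + be))"
      using has_integral_le[OF has_integral_neg[OF int2] int1] has_integral_le[OF int1 int2] by auto
    then show ?thesis by auto
  qed
  also have "\<dots> \<le> C / (q + be)"
  proof -
    have C: "C \<ge> 0" using assms by (simp add: C_def)
    have "(1 - exp (- (q + be) * t)) / (q + be) \<le> 1 / (q + be)"
      using qb by (simp add: divide_right_mono)
    then show ?thesis using C mult_left_mono by fastforce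
  qed
  also have "\<dots> \<le> 2 * 2 ^ i * exp (be * t) / 2 ^ Suc N"
  proof -
    have le: "2 * (2 * lam + mu) \<le> q + be" using assms by (simp add: q be_def)
    have "C / (q + be) = (2 * 2 ^ i * exp (be * t) / 2 ^ N) * ((2 * lam + mu) / (q + be))"
      by (simp add: C_def)
    also have "\<dots> \<le> (2 * 2 ^ i * exp (be * t) / 2 ^ N) * (1 / 2)"
      using le qb assms by (intro mult_left_mono) (auto simp: field_simps)
    finally show ?thesis by simp
  qed
  finally show ?case by (simp add: be_def)
qed

lemma gS_sums:
  assumes "lam > 0" "mu > 0" "t \<ge> 0"
  shows "(\<lambda>n. gS lam mu m n t i) sums Vf lam mu m t i"
proof -
  define c where "c = 2 * 2 ^ i * exp ((3 * lam + 2 * mu) * t)"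
  have "(\<lambda>N. c / 2 ^ N) \<longlonglongrightarrow> 0"
    by (intro LIMSEQ_divide_realpow_zero) auto
  then have "(\<lambda>N. Ef lam mu m N t i) \<longlonglongrightarrow> 0"
    by (rule Lim_null_comparison[rotated]) (use Ef_bound[OF assms(1,2) assms(3)] in \<open>auto simp: c_def\<close>)
  then have "(\<lambda>N. Vf lam mu m t i - Ef lam mu m N t i) \<longlonglongrightarrow> Vf lam mu m t i - 0"
    by (intro tendsto_diff tendsto_const)
  then show ?thesis unfolding sums_def Ef_def by simp
qed



lemma jt_sums:
  assumes "lam > 0" "mu > 0" "t \<ge> 0"
  shows "(\<lambda>n. jump_trans lam mu n t i j) sums trans_prob lam mu t i j"
proof -
  have s: "(\<lambda>n. jump_trans lam mu n t i j) sums (Vf lam mu j t i - (if j = 0 then 0 else Vf lam mu (j - 1) t i))"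
  proof (cases j)
    case 0
    then show ?thesis using gS_sums[OF assms, of 0 i] by (simp add: gS_def)
  next
    case (Suc j')
    have "(\<lambda>n. gS lam mu j n t i - gS lam mu j' n t i) sums (Vf lam mu j t i - Vf lam mu j' t i)"
      by (intro sums_diff gS_sums assms)
    moreover have "gS lam mu j n t i - gS lam mu j' n t i = jump_trans lam mu n t i j" for n
      using Suc by (simp add: gS_def)
    ultimately show ?thesis using Suc by simp
  qed
  then show ?thesis unfolding trans_prob_def using sums_unique by (metis sums_summable summable_sums)
qed

lemma tp_sum:
  assumes "lam > 0" "mu > 0" "t \<ge> 0"
  shows "(\<Sum>j\<le>m. trans_prob lam mu t i j) = Vf lam mu m t i"
proof -
  have "(\<lambda>n. \<Sum>j\<le>m. jump_trans lam mu n t i j) sums (\<Sum>j\<le>m. trans_prob lam mu t i j)"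
    by (intro sums_sum jt_sums assms)
  moreover have "(\<lambda>n. \<Sum>j\<le>m. jump_trans lam mu n t i j) sums Vf lam mu m t i"
    using gS_sums[OF assms, of m i] by (simp add: gS_def)
  ultimately show ?thesis by (rule sums_unique2)
qed

lemma tp_bound:
  assumes "lam > 0" "mu > 0" "t \<ge> 0"
  shows "\<bar>trans_prob lam mu t i j\<bar> \<le> 4"
proof (cases j)
  case 0
  then show ?thesis using tp_sum[OF assms, where m=0 and i=i] Vf_bound[OF assms, of 0 i] by simp
next
  case (Suc j')
  have "trans_prob lam mu t i j = Vf lam mu j t i - Vf lam mu j' t i"
    using tp_sum[OF assms, where m=j and i=i] tp_sum[OF assms, where m=j' and i=i] Suc by simp
  then show ?thesis using Vf_bound[OF assms, of j i] Vf_bound[OF assms, of j' i] by simp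
qed

lemma nat_le_set: "{n::nat. real n \<le> x} = (if x < 0 then {} else {..nat \<lfloor>x\<rfloor>})"
proof (cases "x < 0")
  case True
  then show ?thesis by auto
next
  case False
  have "real n \<le> x \<longleftrightarrow> n \<le> nat \<lfloor>x\<rfloor>" for n
  proof -
    have "real n \<le> x \<longleftrightarrow> int n \<le> \<lfloor>x\<rfloor>" by (metis le_floor_iff of_int_of_nat_eq)
    also have "\<dots> \<longleftrightarrow> n \<le> nat \<lfloor>x\<rfloor>" using False by (simp add: le_nat_iff)
    finally show ?thesis .
  qed
  then show ?thesis using False by auto
qed

lemma distF_eq:
  assumes "lam > 0" "mu > 0" "t \<ge> 0" "\<And>n. tau n \<ge> 0" "tau sums 1"
  shows "distF lam mu tau t (real M) = Qs (lam / mu) (Suc M)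
      + (\<Sum>k\<le>M. Kf lam mu M t k * ((\<Sum>i\<le>k. tau i) - Qs (lam / mu) (Suc k)))"
proof -
  have set: "{j::nat. real j \<le> real M} = {..M}" by auto
  have summ: "summable (\<lambda>i. tau i * trans_prob lam mu t i j)" for j
  proof (rule summable_comparison_test)
    show "summable (\<lambda>i. 4 * tau i)" using assms(5) by (intro summable_mult sums_summable) auto
    show "\<exists>N. \<forall>n\<ge>N. norm (tau n * trans_prob lam mu t n j) \<le> 4 * tau n"
      using tp_bound[OF assms(1-3)] assms(4) by (auto simp: abs_mult mult.commute intro!: mult_left_mono)
  qed
  have "distF lam mu tau t (real M) = (\<Sum>j\<le>M. \<Sum>i. tau i * trans_prob lam mu t i j)"
    unfolding distF_def set ..
  also have "\<dots> = (\<Sum>i. \<Sum>j\<le>M. tau i * trans_prob lam mu t i j)"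
    by (rule suminf_sum[symmetric]) (rule summ)
  also have "\<dots> = (\<Sum>i. tau i * Vf lam mu M t i)"
    by (simp add: sum_distrib_left[symmetric] tp_sum[OF assms(1-3)])
  also have "\<dots> = Qs (lam / mu) (Suc M)
      + (\<Sum>k\<le>M. Kf lam mu M t k * ((\<Sum>i\<le>k. tau i) - Qs (lam / mu) (Suc k)))"
  proof (rule sums_unique[symmetric])
    have fin: "(\<lambda>i. if i \<le> k then tau i else 0) sums (\<Sum>i\<le>k. tau i)" for k
    proof -
      have "(\<lambda>i. if i \<le> k then tau i else 0) sums (\<Sum>i\<in>{..k}. if i \<le> k then tau i else 0)"
        by (rule sums_finite) auto
      then show ?thesis by simp
    qed
    have "(\<lambda>i. Qs (lam / mu) (Suc M) * tau i + (\<Sum>k\<le>M. Kf lam mu M t k * (if i \<le> k then tau i else 0)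
              - Kf lam mu M t k * Qs (lam / mu) (Suc k) * tau i))
       sums (Qs (lam / mu) (Suc M) * 1 + (\<Sum>k\<le>M. Kf lam mu M t k * (\<Sum>i\<le>k. tau i)
              - Kf lam mu M t k * Qs (lam / mu) (Suc k) * 1))"
      by (intro sums_add sums_mult sums_sum sums_diff fin assms(5))
    moreover have "Qs (lam / mu) (Suc M) * tau i + (\<Sum>k\<le>M. Kf lam mu M t k * (if i \<le> k then tau i else 0)
              - Kf lam mu M t k * Qs (lam / mu) (Suc k) * tau i) = tau i * Vf lam mu M t i" for i
    proof -
      have e: "(\<Sum>k\<le>M. Kf lam mu M t k * (if i \<le> k then tau i else 0)
              - Kf lam mu M t k * Qs (lam / mu) (Suc k) * tau i)
           = (\<Sum>k\<le>M. tau i * (Kf lam mu M t k * ((if i \<le> k then 1 else 0) - Qs (lam / mu) (Suc k))))"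
        by (rule sum.cong) (auto simp: algebra_simps)
      show ?thesis unfolding Vf_def distrib_left e sum_distrib_left[symmetric] by (simp add: mult.commute)
    qed
    ultimately show "(\<lambda>i. tau i * Vf lam mu M t i) sums (Qs (lam / mu) (Suc M)
      + (\<Sum>k\<le>M. Kf lam mu M t k * ((\<Sum>i\<le>k. tau i) - Qs (lam / mu) (Suc k))))"
      by (simp add: algebra_simps)
  qed
  finally show ?thesis .
qed



theorem mainTheorem5:
  fixes lam mu :: real and tau :: "nat \<Rightarrow> real" and t :: real
  assumes "lam > 0" and "mu > 0"
    and "\<And>n. tau n \<ge> 0" and "tau sums 1"
    and "t \<ge> 0"
  shows "(SUP x::real. \<bar>Pi_star (lam / mu) x - distF lam mu tau t x\<bar>)
      \<le> (SUP x::real. \<bar>Pi_star (lam / mu) x - cdfT tau x\<bar>)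
         * exp (- mu * t - (lam / mu) * (exp (- mu * t) + mu * t - 1))"
proof -
  define th where "th = lam / mu"
  have th: "th > 0" using assms by (simp add: th_def)
  define S where "S = (SUP x::real. \<bar>Pi_star th x - cdfT tau x\<bar>)"
  have B: "exp (- mu * t - (lam / mu) * (exp (- mu * t) + mu * t - 1)) = Bnd lam mu t"
    by (simp add: Bnd_def)
  have Bnn: "Bnd lam mu t \<ge> 0" by (simp add: Bnd_def)
  have Pi_eq: "Pi_star th x = (if x < 0 then 0 else Qs th (Suc (nat \<lfloor>x\<rfloor>)))" for x
    unfolding Pi_star_def nat_le_set Qs_def by (simp add: lessThan_Suc_atMost)
  have T_eq: "cdfT tau x = (if x < 0 then 0 else (\<Sum>n\<le>nat \<lfloor>x\<rfloor>. tau n))" for x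
    unfolding cdfT_def nat_le_set by simp
  have Tb: "0 \<le> (\<Sum>n\<le>k. tau n)" "(\<Sum>n\<le>k. tau n) \<le> 1" for k
  proof -
    show "0 \<le> (\<Sum>n\<le>k. tau n)" using assms(3) by (simp add: sum_nonneg)
    have "(\<Sum>n\<le>k. tau n) \<le> suminf tau"
      using assms(3,4) by (intro sum_le_suminf) (auto simp: sums_summable)
    then show "(\<Sum>n\<le>k. tau n) \<le> 1" using sums_unique[OF assms(4)] by simp
  qed
  have bnd: "\<bar>Pi_star th x - cdfT tau x\<bar> \<le> 2" for x
  proof -
    have "0 \<le> Qs th (Suc (nat \<lfloor>x\<rfloor>))" "Qs th (Suc (nat \<lfloor>x\<rfloor>)) \<le> 1"
      using Qs_bounds[OF th] by auto
    moreover note Tb[of "nat \<lfloor>x\<rfloor>"]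
    ultimately show ?thesis unfolding Pi_eq T_eq by (auto simp: abs_le_iff)
  qed
  have bdd: "bdd_above (range (\<lambda>x. \<bar>Pi_star th x - cdfT tau x\<bar>))"
    using bnd by (intro bdd_aboveI) auto
  have Sge: "\<bar>Pi_star th x - cdfT tau x\<bar> \<le> S" for x
    unfolding S_def by (rule cSUP_upper[OF _ bdd]) simp
  have S0: "S \<ge> 0" using Sge[of 0] by linarith
  have key: "\<bar>Pi_star th x - distF lam mu tau t x\<bar> \<le> S * Bnd lam mu t" for x
  proof (cases "x < 0")
    case True
    then show ?thesis using S0 Bnn
      by (simp add: Pi_eq distF_def nat_le_set)
  next
    case False
    define M where "M = nat \<lfloor>x\<rfloor>"
    have dF: "distF lam mu tau t x = distF lam mu tau t (real M)"
      unfolding distF_def nat_le_set using False by (simp add: M_def)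
    have "Pi_star th x - distF lam mu tau t x
       = (\<Sum>k\<le>M. Kf lam mu M t k * (Qs th (Suc k) - (\<Sum>i\<le>k. tau i)))"
      unfolding dF distF_eq[OF assms(1,2,5,3,4)] Pi_eq using False
      by (simp add: M_def th_def algebra_simps sum_subtractf)
    also have "\<bar>\<dots>\<bar> \<le> (\<Sum>k\<le>M. Kf lam mu M t k * S)"
    proof (rule order.trans[OF sum_abs sum_mono])
      fix k
      have "\<bar>Qs th (Suc k) - (\<Sum>i\<le>k. tau i)\<bar> \<le> S"
        using Sge[of "real k"] unfolding Pi_eq T_eq by simp
      then show "\<bar>Kf lam mu M t k * (Qs th (Suc k) - (\<Sum>i\<le>k. tau i))\<bar> \<le> Kf lam mu M t k * S"
        using Kf_nonneg[OF assms(1,2,5), of M k] by (simp add: abs_mult mult_left_mono)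
    qed
    also have "\<dots> = S * (\<Sum>k\<le>M. Kf lam mu M t k)" by (simp add: sum_distrib_left mult.commute)
    also have "\<dots> \<le> S * Bnd lam mu t"
      using Ksum_bound[OF assms(1,2,5)] S0 by (simp add: mult_left_mono)
    finally show ?thesis .
  qed
  have "(SUP x::real. \<bar>Pi_star th x - distF lam mu tau t x\<bar>) \<le> S * Bnd lam mu t"
    by (rule cSUP_least) (auto intro: key)
  then show ?thesis unfolding B S_def th_def .
qed

end
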